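(* Let $r\le n$, let $\beta:[r]\to[2n]$ be injective, and let $A\in\mathrm{Sp}_{2n}$ satisfy $Ae_{2n,\beta(i)}=e_{2n,i}$ and $e_{2n,i}^{\top}A=e_{2n,\beta(i)}^{\top}$ for all $i\in[r]$. Then $\beta$ is qubit-injective, and for all $i\in[r]$: $Ae_{2n,2n+1-\beta(i)}=e_{2n,2n+1-i}$ and $e_{2n,2n+1-i}^{\top}A=e_{2n,2n+1-\beta(i)}^{\top}$.
   Context: $\mathbb{F}$ is the field with two elements, $[N]=\{1,\dots,N\}$, $e_{2n,i}$ standard basis column vectors of $\mathbb{F}^{2n}$. $R_{2n}=\sum_{i=1}^{2n}e_{2n,i}e_{2n,2n+1-i}^{\top}$; $\mathrm{Sp}_{2n}=\{C\in\mathbb{F}^{2n\times2n}:C^{\top}R_{2n}C=R_{2n}\}$. $Q_n(i)=\min(i,2n+1-i)$; $\beta$ is qubit-injective if $Q_n\circ\beta$ is injective. *)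

theory Defs
  imports "Jordan_Normal_Form.Matrix" "HOL-Library.Z2"
begin

text \<open>The field with two elements is the type bit (HOL-Library.Z2).
  Indices are 1-based as in the paper: e n i is the i-th standard basis
  column vector of F^(2n), represented as a (2n) x 1 matrix.\<close>

definition e :: "nat \<Rightarrow> nat \<Rightarrow> bit mat" where
  "e n i = mat (2*n) 1 (\<lambda>(a,b). if a + 1 = i then 1 else 0)"

text \<open>R_{2n} = sum_i e_i e_{2n+1-i}^T: entry (a,b) (1-based) is 1 iff b = 2n+1-a.\<close>
definition R :: "nat \<Rightarrow> bit mat" where
  "R n = mat (2*n) (2*n) (\<lambda>(a,b). if (b + 1) = 2*n + 1 - (a + 1) then 1 else 0)"

definition Sp :: "nat \<Rightarrow> bit mat set" where
  "Sp n = {C \<in> carrier_mat (2*n) (2*n). C\<^sup>T * R n * C = R n}"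

definition Q :: "nat \<Rightarrow> nat \<Rightarrow> nat" where
  "Q n i = min i (2*n + 1 - i)"

definition qubit_injective :: "nat \<Rightarrow> nat \<Rightarrow> (nat \<Rightarrow> nat) \<Rightarrow> bool" where
  "qubit_injective n r \<beta> \<longleftrightarrow> inj_on (Q n \<circ> \<beta>) {1..r}"

end

theory Submission imports Defs "Jordan_Normal_Form.Determinant" begin

lemma R_carrier[simp]: "R n \<in> carrier_mat (2*n) (2*n)" by (simp add: R_def)
lemma e_carrier[simp]: "e n i \<in> carrier_mat (2*n) 1" by (simp add: e_def)
lemma dims[simp]: "dim_row (R n) = 2*n" "dim_col (R n) = 2*n" "dim_row (e n i) = 2*n" "dim_col (e n i) = 1"
  by (auto simp: R_def e_def)
lemma R_T: "(R n)\<^sup>T = R n"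
  by (rule eq_matI) (auto simp: R_def)

lemma sum_single: "finite S \<Longrightarrow> (\<Sum>k\<in>S. (if k = c then f k else 0)) = (if c \<in> S then f c else (0::'a::comm_monoid_add))"
  by (simp add: sum.delta)

lemma R_R: "R n * R n = 1\<^sub>m (2*n)"
proof (rule eq_matI)
  fix a b assume "a < dim_row (1\<^sub>m (2*n) :: bit mat)" "b < dim_col (1\<^sub>m (2*n) :: bit mat)"
  then have ab: "a < 2*n" "b < 2*n" by auto
  have "(R n * R n) $$ (a,b) = row (R n) a \<bullet> col (R n) b" using ab by simp
  also have "\<dots> = (\<Sum>k\<in>{0..<2*n}. (if k = 2*n-1-a then (if b = 2*n-1-k then 1 else 0) else 0))"
    unfolding scalar_prod_def using ab by (intro sum.cong) (auto simp: R_def)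
  also have "\<dots> = (if a = b then 1 else 0)" using ab by (subst sum_single) auto
  also have "\<dots> = (1\<^sub>m (2*n) :: bit mat) $$ (a,b)" using ab by simp
  finally show "(R n * R n) $$ (a,b) = (1\<^sub>m (2*n) :: bit mat) $$ (a,b)" .
qed (auto simp: R_def)

lemma R_e: "i \<in> {1..2*n} \<Longrightarrow> R n * e n i = e n (2*n+1-i)"
proof (rule eq_matI)
  fix a b assume i: "i \<in> {1..2*n}" and "a < dim_row (e n (2*n+1-i))" "b < dim_col (e n (2*n+1-i))"
  then have ab: "a < 2*n" "b = 0" by (auto simp: e_def)
  have "(R n * e n i) $$ (a,b) = row (R n) a \<bullet> col (e n i) b" using ab by simp
  also have "\<dots> = (\<Sum>k\<in>{0..<2*n}. (if k = 2*n-1-a then (if k+1 = i then 1 else 0) else 0))"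
    unfolding scalar_prod_def using ab by (intro sum.cong) (auto simp: R_def e_def)
  also have "\<dots> = (if a + 1 = 2*n+1-i then 1 else 0)" using ab i by (subst sum_single) auto
  also have "\<dots> = e n (2*n+1-i) $$ (a,b)" using ab by (simp add: e_def)
  finally show "(R n * e n i) $$ (a,b) = e n (2*n+1-i) $$ (a,b)" .
qed (auto simp: R_def e_def)

lemma e_inj: "i \<in> {1..2*n} \<Longrightarrow> j \<in> {1..2*n} \<Longrightarrow> e n i = e n j \<Longrightarrow> i = j"
proof -
  assume i: "i \<in> {1..2*n}" and j: "j \<in> {1..2*n}" and eq: "e n i = e n j"
  have "e n i $$ (i-1,0) = e n j $$ (i-1,0)" using eq by simp
  then show "i = j" using i j by (auto simp: e_def split: if_splits)
qed


lemma eT_R: "i \<in> {1..2*n} \<Longrightarrow> (e n i)\<^sup>T * R n = (e n (2*n+1-i))\<^sup>T"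
proof -
  assume i: "i \<in> {1..2*n}"
  have "(e n i)\<^sup>T * R n = (R n * e n i)\<^sup>T"
    using transpose_mult[OF R_carrier e_carrier] R_T[of n] by simp
  also have "\<dots> = (e n (2*n+1-i))\<^sup>T" using R_e[OF i] by simp
  finally show ?thesis .
qed

theorem lemma10:
  fixes n r :: nat and \<beta> :: "nat \<Rightarrow> nat" and A :: "bit mat"
  assumes "r \<le> n"
    and "\<beta> ` {1..r} \<subseteq> {1..2*n}"
    and "inj_on \<beta> {1..r}"
    and "A \<in> Sp n"
    and "\<And>i. i \<in> {1..r} \<Longrightarrow> A * e n (\<beta> i) = e n i"
    and "\<And>i. i \<in> {1..r} \<Longrightarrow> (e n i)\<^sup>T * A = (e n (\<beta> i))\<^sup>T"
  shows "qubit_injective n r \<beta> \<and>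
    (\<forall>i\<in>{1..r}. A * e n (2*n + 1 - \<beta> i) = e n (2*n + 1 - i) \<and>
                 (e n (2*n + 1 - i))\<^sup>T * A = (e n (2*n + 1 - \<beta> i))\<^sup>T)"
proof -
  have Ac: "A \<in> carrier_mat (2*n) (2*n)" and sp: "A\<^sup>T * R n * A = R n"
    using assms(4) by (auto simp: Sp_def)
  have ATc: "A\<^sup>T \<in> carrier_mat (2*n) (2*n)" using Ac by simp
  note Rc = R_carrier[of n]
  have BA: "(R n * A\<^sup>T * R n) * A = 1\<^sub>m (2*n)"
  proof -
    have "(R n * A\<^sup>T * R n) * A = R n * (A\<^sup>T * R n * A)"
      using Rc ATc Ac by (simp add: assoc_mult_mat[of _ "2*n" "2*n" _ "2*n" _ "2*n"])
    also have "\<dots> = 1\<^sub>m (2*n)" using sp R_R by simp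
    finally show ?thesis .
  qed
  have AB: "A * (R n * A\<^sup>T * R n) = 1\<^sub>m (2*n)"
    by (rule mat_mult_left_right_inverse[OF _ Ac BA]) (use Rc ATc in auto)
  have ARA: "A * R n * A\<^sup>T = R n"
  proof -
    have RAc: "R n * A\<^sup>T \<in> carrier_mat (2*n) (2*n)" using mult_carrier_mat[OF Rc ATc] .
    have "(A * (R n * A\<^sup>T * R n)) * R n = A * ((R n * A\<^sup>T * R n) * R n)"
      using Ac mult_carrier_mat[OF RAc Rc] Rc by (rule assoc_mult_mat)
    also have "(R n * A\<^sup>T * R n) * R n = (R n * A\<^sup>T) * (R n * R n)"
      using RAc Rc Rc by (rule assoc_mult_mat)
    also have "\<dots> = R n * A\<^sup>T" using R_R[of n] right_mult_one_mat[OF RAc] by simp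
    also have "A * (R n * A\<^sup>T) = A * R n * A\<^sup>T"
      using Rc ATc Ac by (simp add: assoc_mult_mat[of _ "2*n" "2*n" _ "2*n" _ "2*n"])
    finally have "A * R n * A\<^sup>T = (A * (R n * A\<^sup>T * R n)) * R n" by simp
    also have "\<dots> = R n" using AB Rc by simp
    finally show ?thesis .
  qed
  have col: "A * e n (2*n + 1 - \<beta> i) = e n (2*n + 1 - i)" if i: "i \<in> {1..r}" for i
  proof -
    have bi: "\<beta> i \<in> {1..2*n}" using assms(2) i by blast
    have i2: "i \<in> {1..2*n}" using i assms(1) by auto
    have ATe: "A\<^sup>T * e n i = e n (\<beta> i)"
      using arg_cong[OF assms(6)[OF i], of transpose_mat] transpose_mult[OF transpose_carrier_mat[THEN iffD2, OF e_carrier] Ac]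
      by simp
    have "A * e n (2*n + 1 - \<beta> i) = A * (R n * (A\<^sup>T * e n i))" using R_e[OF bi] ATe by simp
    also have "\<dots> = (A * R n * A\<^sup>T) * e n i"
      using assoc_mult_mat[OF mult_carrier_mat[OF Ac Rc] ATc e_carrier]
        assoc_mult_mat[OF Ac Rc mult_carrier_mat[OF ATc e_carrier]] by simp
    also have "\<dots> = e n (2*n + 1 - i)" using ARA R_e[OF i2] by simp
    finally show ?thesis .
  qed
  have rw: "(e n (2*n + 1 - i))\<^sup>T * A = (e n (2*n + 1 - \<beta> i))\<^sup>T" if i: "i \<in> {1..r}" for i
  proof -
    have bi: "\<beta> i \<in> {1..2*n}" using assms(2) i by blast
    have i2: "i \<in> {1..2*n}" using i assms(1) by auto
    have eAT: "(e n (\<beta> i))\<^sup>T * A\<^sup>T = (e n i)\<^sup>T"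
      using arg_cong[OF assms(5)[OF i], of transpose_mat] transpose_mult[OF Ac e_carrier]
      by simp
    have eTc: "(e n (\<beta> i))\<^sup>T \<in> carrier_mat 1 (2*n)" using transpose_carrier_mat[THEN iffD2, OF e_carrier] .
    have eATc: "(e n (\<beta> i))\<^sup>T * A\<^sup>T \<in> carrier_mat 1 (2*n)" using mult_carrier_mat[OF eTc ATc] .
    have RAc: "R n * A \<in> carrier_mat (2*n) (2*n)" using mult_carrier_mat[OF Rc Ac] .
    have as1: "((e n (\<beta> i))\<^sup>T * A\<^sup>T * R n) * A = ((e n (\<beta> i))\<^sup>T * A\<^sup>T) * (R n * A)"
      using eATc Rc Ac by (rule assoc_mult_mat)
    have as2: "((e n (\<beta> i))\<^sup>T * A\<^sup>T) * (R n * A) = (e n (\<beta> i))\<^sup>T * (A\<^sup>T * (R n * A))"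
      using eTc ATc RAc by (rule assoc_mult_mat)
    have as3: "A\<^sup>T * (R n * A) = A\<^sup>T * R n * A"
      using ATc Rc Ac by (rule assoc_mult_mat[symmetric])
    have "(e n (2*n + 1 - i))\<^sup>T * A = ((e n (\<beta> i))\<^sup>T * A\<^sup>T * R n) * A"
      using eAT eT_R[OF i2] by simp
    also have "\<dots> = (e n (\<beta> i))\<^sup>T * (A\<^sup>T * R n * A)"
      using as1 as2 as3 by simp
    also have "\<dots> = (e n (2*n + 1 - \<beta> i))\<^sup>T" using sp eT_R[OF bi] by simp
    finally show ?thesis .
  qed
  have qi: "qubit_injective n r \<beta>"
    unfolding qubit_injective_def
  proof (rule inj_onI)
    fix i j assume i: "i \<in> {1..r}" and j: "j \<in> {1..r}" and q: "(Q n \<circ> \<beta>) i = (Q n \<circ> \<beta>) j"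
    have bi: "\<beta> i \<in> {1..2*n}" and bj: "\<beta> j \<in> {1..2*n}" using assms(2) i j by blast+
    from q bi bj have "\<beta> i = \<beta> j \<or> \<beta> j = 2*n+1-\<beta> i" by (auto simp: Q_def)
    then show "i = j"
    proof
      assume "\<beta> i = \<beta> j" then show ?thesis using assms(3) i j by (auto dest: inj_onD)
    next
      assume h: "\<beta> j = 2*n+1-\<beta> i"
      have "e n j = e n (2*n+1-i)" using assms(5)[OF j] col[OF i] h by simp
      moreover have "2*n+1-i \<in> {1..2*n}" "j \<in> {1..2*n}" using i j assms(1) by auto
      ultimately have "j = 2*n+1-i" using e_inj by blast
      then show ?thesis using i j assms(1) by auto
    qed
  qed
  show ?thesis using qi col rw by blast
qed

end
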